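(* For any noisy discrete memoryless classical channel $N_n$, the parallel use of $N_n$ with a perfect $2$-level quantum channel cannot exhibit one-shot zero-error superadditivity under the vertex-encoding protocol; that is, no implementation of the vertex-encoding protocol with $d=2$ transmits more than $\alpha(G(N_n))\cdot 2$ messages.
   Context: A discrete memoryless classical channel $N$ has finite input alphabet $\mathcal{X}$, finite output alphabet $\mathcal{Y}$ and conditional probabilities $P(y|x)$. Distinct inputs $x,x'$ are confusable if some output $y$ has $P(y|x)>0$ and $P(y|x')>0$; the confusability graph $G(N)$ has vertex set $\mathcal{X}$ and edges between distinct confusable inputs, and $\alpha(G(N))$ (its independence number) is the one-shot zero-error capacity of $N$. For each output $y$, the hyperedge $h_y=\{x: P(y|x)>0\}$. A perfect $d$-level quantum channel is the identity channel on states of $\mathbb{C}^d$, with one-shot zero-error capacity $d$. The vertex-encoding protocol with a perfect $d$-level quantum channel: one assigns to every input $v\in\mathcal{X}$ a unit vector $\ket{\psi_v}\in\mathbb{C}^d$ such that $\ket{\psi_v}\perp\ket{\psi_w}$ whenever $v,w$ are adjacent in $G(N)$. Messages are identified with the $n=|\mathcal{X}|$ inputs; to send $v$, the sender inputs $v$ into $N$ and sends $\ket{\psi_v}$ through the perfect quantum channel; upon seeing output $y$, the receiver performs a projective measurement containing the projectors $\ket{\psi_w}\!\bra{\psi_w}$, $w\in h_y$ (completed to the identity), which identifies $v$ with certainty. The protocol transmits $n$ messages with zero error, and it exhibits one-shot zero-error superadditivity if $n>\alpha(G(N))\cdot d$. *)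

theory Defs
  imports "HOL-Analysis.Analysis"
begin

definition dm_channel :: "'x set \<Rightarrow> 'y set \<Rightarrow> ('x \<Rightarrow> 'y \<Rightarrow> real) \<Rightarrow> bool" where
  "dm_channel X Y P \<longleftrightarrow> finite X \<and> finite Y \<and> X \<noteq> {} \<and>
     (\<forall>x\<in>X. \<forall>y\<in>Y. P x y \<ge> 0) \<and> (\<forall>x\<in>X. (\<Sum>y\<in>Y. P x y) = 1)"

text \<open>Distinct inputs are confusable if some output has positive probability under both;
  this is the edge relation of the confusability graph G(N) on vertex set X.\<close>
definition confusable :: "'y set \<Rightarrow> ('x \<Rightarrow> 'y \<Rightarrow> real) \<Rightarrow> 'x \<Rightarrow> 'x \<Rightarrow> bool" where
  "confusable Y P x x' \<longleftrightarrow> x \<noteq> x' \<and> (\<exists>y\<in>Y. P x y > 0 \<and> P x' y > 0)"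

definition noisy_channel :: "'x set \<Rightarrow> 'y set \<Rightarrow> ('x \<Rightarrow> 'y \<Rightarrow> real) \<Rightarrow> bool" where
  "noisy_channel X Y P \<longleftrightarrow> (\<exists>x\<in>X. \<exists>x'\<in>X. confusable Y P x x')"

definition independent_set :: "'x set \<Rightarrow> ('x \<Rightarrow> 'x \<Rightarrow> bool) \<Rightarrow> 'x set \<Rightarrow> bool" where
  "independent_set V E S \<longleftrightarrow> S \<subseteq> V \<and> (\<forall>u\<in>S. \<forall>v\<in>S. \<not> E u v)"

definition independence_number :: "'x set \<Rightarrow> ('x \<Rightarrow> 'x \<Rightarrow> bool) \<Rightarrow> nat" where
  "independence_number V E = Max {card S | S. independent_set V E S}"

definition hinner :: "complex ^ 'd \<Rightarrow> complex ^ 'd \<Rightarrow> complex" where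
  "hinner u v = (\<Sum>i\<in>UNIV. cnj (u $ i) * v $ i)"

text \<open>A vertex-encoding protocol with a perfect d-level quantum channel: an assignment of a
  unit vector psi v in C^d to every input v, with psi v orthogonal to psi w whenever v, w are
  adjacent in G(N). (The receiver's measurement is then determined by psi.)\<close>
definition vertex_encoding ::
  "'x set \<Rightarrow> 'y set \<Rightarrow> ('x \<Rightarrow> 'y \<Rightarrow> real) \<Rightarrow> ('x \<Rightarrow> complex ^ 'd) \<Rightarrow> bool" where
  "vertex_encoding X Y P psi \<longleftrightarrow>
     (\<forall>v\<in>X. hinner (psi v) (psi v) = 1) \<and>
     (\<forall>v\<in>X. \<forall>w\<in>X. confusable Y P v w \<longrightarrow> hinner (psi v) (psi w) = 0)"

end

theory Submission
  imports Defs
begin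

definition vp :: "complex ^ 2 \<Rightarrow> complex ^ 2" where
  "vp v = (\<chi> i. if i = 1 then - cnj (v$2) else cnj (v$1))"

lemma hinner2: "hinner (u::complex^2) w = cnj (u$1) * w$1 + cnj (u$2) * w$2"
  by (simp add: hinner_def sum_2)

lemma vp1: "vp v $ 1 = - cnj (v$2)" and vp2: "vp v $ 2 = cnj (v$1)"
  by (simp_all add: vp_def)

lemma decomp:
  assumes "hinner v v = 1"
  shows "x = hinner v x *s v + hinner (vp v) x *s vp v"
proof -
  have h: "cnj (v$1) * v$1 + cnj (v$2) * v$2 = 1" using assms by (simp add: hinner2)
  have "x$1 = x$1 * (cnj (v$1) * v$1 + cnj (v$2) * v$2)" using h by simp
  moreover have "x$2 = x$2 * (cnj (v$1) * v$1 + cnj (v$2) * v$2)" using h by simp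
  ultimately show ?thesis
    unfolding vec_eq_iff forall_2 by (simp add: hinner2 vp1 vp2 algebra_simps)
qed

lemma hinner_smult_l: "hinner (c *s (u::complex^2)) w = cnj c * hinner u w"
  by (simp add: hinner2 algebra_simps)

lemma hinner_smult_r: "hinner (u::complex^2) (c *s w) = c * hinner u w"
  by (simp add: hinner2 algebra_simps)

lemma hinner_sym0: "hinner (u::complex^2) w = 0 \<Longrightarrow> hinner w u = 0"
proof -
  assume "hinner u w = 0"
  then have "cnj (hinner u w) = 0" by simp
  then show ?thesis by (simp add: hinner2 mult.commute)
qed

lemma vp_orth: "hinner v (vp v) = 0"
  by (simp add: hinner2 vp1 vp2 algebra_simps)

lemma vp_unit: "hinner v v = 1 \<Longrightarrow> hinner (vp v) (vp v) = 1"
  by (simp add: hinner2 vp1 vp2 algebra_simps)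



lemma decA: assumes "hinner v v = 1" "hinner (vp v) x = 0" shows "x = hinner v x *s v"
proof -
  have "x = hinner v x *s v + hinner (vp v) x *s vp v" by (rule decomp[OF assms(1)])
  also have "\<dots> = hinner v x *s v" using assms(2) by simp
  finally show ?thesis .
qed

lemma decB: assumes "hinner v v = 1" "hinner v x = 0" shows "x = hinner (vp v) x *s vp v"
proof -
  have "x = hinner v x *s v + hinner (vp v) x *s vp v" by (rule decomp[OF assms(1)])
  also have "\<dots> = hinner (vp v) x *s vp v" using assms(2) by simp
  finally show ?thesis .
qed

lemma dec0: assumes "hinner v v = 1" "hinner v x = 0" "hinner (vp v) x = 0" shows "x = 0"
proof -
  have "x = hinner v x *s v + hinner (vp v) x *s vp v" by (rule decomp[OF assms(1)])
  also have "\<dots> = 0" using assms(2,3) by simp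
  finally show ?thesis .
qed


lemma L1: assumes "u = c *s (v::complex^2)" "hinner u u = 1" shows "c \<noteq> 0"
proof
  assume "c = 0"
  then have "u = 0" using assms(1) by simp
  then show False using assms(2) by (simp add: hinner2)
qed

lemma L2: assumes "hinner v v = 1" "u = c *s (v::complex^2)" "u' = c' *s v"
  "hinner u u = 1" "hinner u' u' = 1" shows "hinner u u' \<noteq> 0"
proof -
  have "c \<noteq> 0" "c' \<noteq> 0" using L1 assms by blast+
  moreover have "hinner u u' = cnj c * c'" using assms(1-3) by (simp add: hinner_smult_l hinner_smult_r)
  ultimately show ?thesis by simp
qed

lemma L3: assumes "u = c *s (v::complex^2)" "hinner u u = 1" "hinner u x = 0" shows "hinner v x = 0"
proof -
  have "c \<noteq> 0" using L1 assms by blast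
  moreover have "hinner u x = cnj c * hinner v x" using assms(1) by (simp add: hinner_smult_l)
  ultimately show ?thesis using assms(3) by simp
qed

lemma main:
  fixes psi :: "'x \<Rightarrow> complex ^ 2" and E :: "'x \<Rightarrow> 'x \<Rightarrow> bool"
  assumes unit: "\<And>v. v \<in> X \<Longrightarrow> hinner (psi v) (psi v) = 1"
    and orth: "\<And>v w. v \<in> X \<Longrightarrow> w \<in> X \<Longrightarrow> E v w \<Longrightarrow> hinner (psi v) (psi w) = 0"
    and sym: "\<And>v w. E v w \<Longrightarrow> E w v"
  shows "finite S \<Longrightarrow> S \<subseteq> X \<Longrightarrow> \<exists>I. independent_set S E I \<and> card S \<le> 2 * card I"
proof (induction "card S" arbitrary: S rule: less_induct)
  case less
  show ?case
  proof (cases "S = {}")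
    case True
    then show ?thesis by (auto simp: independent_set_def)
  next
    case False
    then obtain v0 where v0: "v0 \<in> S" by auto
    define v where "v = psi v0"
    have vu: "hinner v v = 1" using unit v0 less.prems v_def by auto
    define A where "A = {w \<in> S. hinner (vp v) (psi w) = 0}"
    define B where "B = {w \<in> S. hinner v (psi w) = 0}"
    define R where "R = S - A - B"
    have Aform: "psi w = hinner v (psi w) *s v" if "w \<in> A" for w
      using that A_def by (intro decA[OF vu]) auto
    have Bform: "psi w = hinner (vp v) (psi w) *s vp v" if "w \<in> B" for w
      using that B_def by (intro decB[OF vu]) auto
    have irr: "\<not> E w w" if "w \<in> S" for w
      using orth[of w w] unit[of w] that less.prems by auto
    have v0A: "v0 \<in> A" unfolding A_def v_def using v0 vp_orth[of "psi v0"] hinner_sym0 by auto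
    have AB: "A \<inter> B = {}"
    proof (rule ccontr)
      assume "A \<inter> B \<noteq> {}"
      then obtain w where w: "w \<in> A" "w \<in> B" by auto
      then have "psi w = 0" using A_def B_def by (intro dec0[OF vu]) auto
      then show False using unit[of w] w less.prems A_def by (auto simp: hinner_def)
    qed
    have Aind: "\<not> E w w'" if "w \<in> A" "w' \<in> A" for w w'
    proof
      assume e: "E w w'"
      have ws: "w \<in> X" "w' \<in> X" using that less.prems A_def by auto
      have "hinner (psi w) (psi w') = 0" using orth ws e by auto
      moreover have "hinner (psi w) (psi w') \<noteq> 0"
        by (rule L2[OF vu Aform[OF that(1)] Aform[OF that(2)]]) (use unit ws in auto)
      ultimately show False by simp
    qed
    have Bind: "\<not> E w w'" if "w \<in> B" "w' \<in> B" for w w'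
    proof
      assume e: "E w w'"
      have ws: "w \<in> X" "w' \<in> X" using that less.prems B_def by auto
      have "hinner (psi w) (psi w') = 0" using orth ws e by auto
      moreover have "hinner (psi w) (psi w') \<noteq> 0"
        by (rule L2[OF vp_unit[OF vu] Bform[OF that(1)] Bform[OF that(2)]]) (use unit ws in auto)
      ultimately show False by simp
    qed
    have AR: "\<not> E w r" if "w \<in> A" "r \<in> R" for w r
    proof
      assume e: "E w r"
      have ws: "w \<in> X" "r \<in> X" using that less.prems A_def R_def by auto
      have "hinner (psi w) (psi r) = 0" using orth ws e by auto
      then have "hinner v (psi r) = 0" using L3[OF Aform[OF that(1)]] unit ws by blast
      then have "r \<in> B" using that R_def B_def by auto
      then show False using that R_def by auto
    qed
    have BR: "\<not> E w r" if "w \<in> B" "r \<in> R" for w r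
    proof
      assume e: "E w r"
      have ws: "w \<in> X" "r \<in> X" using that less.prems B_def R_def by auto
      have "hinner (psi w) (psi r) = 0" using orth ws e by auto
      then have "hinner (vp v) (psi r) = 0" using L3[OF Bform[OF that(1)]] unit ws by blast
      then have "r \<in> A" using that R_def A_def by auto
      then show False using that R_def by auto
    qed
    have fin: "finite A" "finite B" "finite R" using less.prems A_def B_def R_def by auto
    have "R \<subset> S" using v0A v0 R_def by auto
    then have RS: "card R < card S" using less.prems(1) by (rule psubset_card_mono[rotated])
    obtain J where J: "independent_set R E J" "card R \<le> 2 * card J"
      using less.hyps[OF RS] fin less.prems R_def by auto
    have cardS: "card S = card A + card B + card R"
    proof -
      have "S = (A \<union> B) \<union> R" using R_def A_def B_def by auto
      moreover have "(A \<union> B) \<inter> R = {}" using R_def by auto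
      ultimately have "card S = card (A \<union> B) + card R" using fin by (simp add: card_Un_disjoint)
      also have "card (A \<union> B) = card A + card B" using fin AB by (simp add: card_Un_disjoint)
      finally show ?thesis .
    qed
    have JR: "J \<subseteq> R" "card J \<le> card R" using J fin by (auto simp: independent_set_def card_mono)
    have disj: "C \<inter> J = {}" if "C \<subseteq> A \<union> B" for C using JR that R_def by auto
    show ?thesis
    proof (cases "card B \<le> card A")
      case True
      have "independent_set S E (A \<union> J)"
        unfolding independent_set_def
      proof (intro conjI ballI)
        show "A \<union> J \<subseteq> S" using JR R_def A_def by auto
      next
        fix u w assume u: "u \<in> A \<union> J" and w: "w \<in> A \<union> J"
        show "\<not> E u w"
        proof (cases "u \<in> A")
          case True
          then show ?thesis using w Aind AR JR by auto
        next
          case uJ: False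
          then have "u \<in> J" using u by auto
          then show ?thesis using w AR JR J(1) sym unfolding independent_set_def by blast
        qed
      qed
      moreover have "card (A \<union> J) = card A + card J"
        using disj[of A] fin JR by (simp add: card_Un_disjoint finite_subset)
      ultimately show ?thesis using cardS J(2) True by (intro exI[of _ "A \<union> J"]) auto
    next
      case False
      have "independent_set S E (B \<union> J)"
        unfolding independent_set_def
      proof (intro conjI ballI)
        show "B \<union> J \<subseteq> S" using JR R_def B_def by auto
      next
        fix u w assume u: "u \<in> B \<union> J" and w: "w \<in> B \<union> J"
        show "\<not> E u w"
        proof (cases "u \<in> B")
          case True
          then show ?thesis using w Bind BR JR by auto
        next
          case uJ: False
          then have "u \<in> J" using u by auto
          then show ?thesis using w BR JR J(1) sym unfolding independent_set_def by blast
        qed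
      qed
      moreover have "card (B \<union> J) = card B + card J"
        using disj[of B] fin JR by (simp add: card_Un_disjoint finite_subset)
      ultimately show ?thesis using cardS J(2) False by (intro exI[of _ "B \<union> J"]) auto
    qed
  qed
qed

theorem corollary1:
  fixes X :: "'x set" and Y :: "'y set" and P :: "'x \<Rightarrow> 'y \<Rightarrow> real"
    and psi :: "'x \<Rightarrow> complex ^ 2"
  assumes "dm_channel X Y P"
    and "noisy_channel X Y P"
    and "vertex_encoding X Y P psi"
  shows "card X \<le> independence_number X (confusable Y P) * 2"
proof -
  have fin: "finite X" using assms(1) by (simp add: dm_channel_def)
  have sym: "\<And>v w. confusable Y P v w \<Longrightarrow> confusable Y P w v"
    by (auto simp: confusable_def)
  obtain I where I: "independent_set X (confusable Y P) I" "card X \<le> 2 * card I"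
    using main[of X psi "confusable Y P" X] assms(3) fin sym
    unfolding vertex_encoding_def by blast
  have "finite {card S | S. independent_set X (confusable Y P) S}"
  proof -
    have "{card S | S. independent_set X (confusable Y P) S} \<subseteq> card ` Pow X"
      by (auto simp: independent_set_def)
    then show ?thesis using fin finite_subset by blast
  qed
  then have "card I \<le> independence_number X (confusable Y P)"
    unfolding independence_number_def using I(1) by (intro Max_ge) auto
  then show ?thesis using I(2) by linarith
qed

end
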